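(* Let $q=AB$ be a two-atom query over $R$ satisfying the standing assumption below and the zig-zag property. For every database $D$, every repair $r$ of $D$ and all facts $a,b$: if $r\models q(ab)$ then $\{a\}\in\Delta_2(q,D)$ or there exists a repair $s$ of $D$ such that $q(s)\subsetneq q(r)$.
   Context: $R$ is a relation symbol of arity $k\ge1$ whose first $l$ positions form its primary key. Facts $R(\bar a)$, atoms $R(\bar x)$; $\overline{\mathrm{key}}(t)$ is the tuple of the first $l$ entries of $t$; $a\sim b$ iff $\overline{\mathrm{key}}(a)=\overline{\mathrm{key}}(b)$. A database is a finite set of facts; a block is a maximal set of pairwise key-equal facts; a repair is a $\subseteq$-maximal subset with no two distinct key-equal facts. For a set of facts $S$, a solution of $q$ in $S$ is a pair $(\mu(A),\mu(B))$ with $\mu$ a mapping from variables to elements and $\mu(A),\mu(B)\in S$; $q(S)$ is the set of solutions and $S\models q(ab)$ means $(a,b)\in q(S)$; $S$ satisfies $q$ if $q(S)\neq\emptyset$. Zig-zag property: for every database $D$ and facts $a,b,b',c$ of $D$ with $a\not\sim c$, $a\ne b$, $b\sim b'$, if $D\models q(ab)$ and $D\models q(cb')$ then $D\models q(ab')$. Greedy fixpoint: a $k$-set of $D$ is $S\subseteq D$ with $|S|\le k$ and at most one fact per block; $\Delta_k(q,D)$ is the least set of $k$-sets containing every $k$-set satisfying $q$ and containing a $k$-set $S$ whenever some block $B$ of $D$ is such that for every $u\in B$ some $S'\subseteq S\cup\{u\}$ lies in $\Delta_k(q,D)$. Standing assumption: $\overline{\mathrm{key}}(A)\ne\overline{\mathrm{key}}(B)$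 and $q$ is not equivalent over all consistent databases to a single-atom query. *)

theory Defs
  imports Main
begin

text \<open>Facts of the relation R (arity k) are lists of elements of length k;
  atoms are lists of variables of length k. The primary key consists of
  the first l positions.\<close>

definition key :: "nat \<Rightarrow> 'a list \<Rightarrow> 'a list" where
  "key l t = take l t"

definition database :: "nat \<Rightarrow> 'e list set \<Rightarrow> bool" where
  "database k D \<longleftrightarrow> finite D \<and> (\<forall>t\<in>D. length t = k)"

definition consistent :: "nat \<Rightarrow> 'e list set \<Rightarrow> bool" where
  "consistent l S \<longleftrightarrow> (\<forall>a\<in>S. \<forall>b\<in>S. key l a = key l b \<longrightarrow> a = b)"

definition blocks :: "nat \<Rightarrow> 'e list set \<Rightarrow> 'e list set set" where
  "blocks l D = {{b\<in>D. key l b = key l a} | a. a \<in> D}"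

definition repair :: "nat \<Rightarrow> 'e list set \<Rightarrow> 'e list set \<Rightarrow> bool" where
  "repair l D r \<longleftrightarrow> r \<subseteq> D \<and> consistent l r \<and>
     (\<forall>r'. r \<subseteq> r' \<longrightarrow> r' \<subseteq> D \<longrightarrow> consistent l r' \<longrightarrow> r' = r)"

definition qsol :: "'v list \<Rightarrow> 'v list \<Rightarrow> 'e list set \<Rightarrow> ('e list \<times> 'e list) set" where
  "qsol A B S = {(map \<mu> A, map \<mu> B) | \<mu>. map \<mu> A \<in> S \<and> map \<mu> B \<in> S}"

definition zigzag :: "nat \<Rightarrow> nat \<Rightarrow> 'v list \<Rightarrow> 'v list \<Rightarrow> 'e itself \<Rightarrow> bool" where
  "zigzag k l A B _ \<longleftrightarrow>
     (\<forall>(D::'e list set) a b b' c. database k D \<longrightarrow>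
        a \<in> D \<longrightarrow> b \<in> D \<longrightarrow> b' \<in> D \<longrightarrow> c \<in> D \<longrightarrow>
        key l a \<noteq> key l c \<longrightarrow> a \<noteq> b \<longrightarrow> key l b = key l b' \<longrightarrow>
        (a, b) \<in> qsol A B D \<longrightarrow> (c, b') \<in> qsol A B D \<longrightarrow> (a, b') \<in> qsol A B D)"

definition equiv_single_atom :: "nat \<Rightarrow> nat \<Rightarrow> 'v list \<Rightarrow> 'v list \<Rightarrow> 'e itself \<Rightarrow> bool" where
  "equiv_single_atom k l A B _ \<longleftrightarrow>
     (\<exists>z :: nat list. length z = k \<and>
        (\<forall>D :: 'e list set. database k D \<longrightarrow> consistent l D \<longrightarrow>
           (qsol A B D \<noteq> {} \<longleftrightarrow> (\<exists>\<mu>. map \<mu> z \<in> D))))"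

definition kset :: "nat \<Rightarrow> nat \<Rightarrow> 'e list set \<Rightarrow> 'e list set \<Rightarrow> bool" where
  "kset n l D S \<longleftrightarrow> S \<subseteq> D \<and> card S \<le> n \<and> consistent l S"

inductive_set Delta :: "nat \<Rightarrow> nat \<Rightarrow> 'v list \<Rightarrow> 'v list \<Rightarrow> 'e list set \<Rightarrow> 'e list set set"
  for n l A B D where
  base: "kset n l D S \<Longrightarrow> qsol A B S \<noteq> {} \<Longrightarrow> S \<in> Delta n l A B D"
| step: "kset n l D S \<Longrightarrow> Bl \<in> blocks l D \<Longrightarrow>
         (\<forall>u\<in>Bl. \<exists>S'. S' \<subseteq> S \<union> {u} \<and> S' \<in> Delta n l A B D) \<Longrightarrow> S \<in> Delta n l A B D"

end

theory Submission
  imports Defs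
begin

definition Qr :: "'v list \<Rightarrow> 'v list \<Rightarrow> 'e list \<Rightarrow> 'e list \<Rightarrow> bool" where
  "Qr A B x y \<longleftrightarrow> (\<exists>\<mu>. map \<mu> A = x \<and> map \<mu> B = y)"

lemma qsol_iff: "(x, y) \<in> qsol A B S \<longleftrightarrow> x \<in> S \<and> y \<in> S \<and> Qr A B x y"
  by (auto simp: qsol_def Qr_def)

lemma not_Delta_step:
  assumes "kset n l D S" "S \<notin> Delta n l A B D" "Bl \<in> blocks l D"
  shows "\<exists>u\<in>Bl. \<forall>S'. S' \<subseteq> S \<union> {u} \<longrightarrow> S' \<notin> Delta n l A B D"
proof (rule ccontr)
  assume "\<not> ?thesis"
  then have "\<forall>u\<in>Bl. \<exists>S'. S' \<subseteq> S \<union> {u} \<and> S' \<in> Delta n l A B D"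
    by meson
  then have "S \<in> Delta n l A B D" by (rule Delta.step[OF assms(1,3)])
  then show False using assms(2) by (rule notE[rotated])
qed

lemma pair_in_Delta:
  assumes "x \<in> D" "y \<in> D" "key l x \<noteq> key l y \<or> x = y" "Qr A B x y"
  shows "{x, y} \<in> Delta 2 l A B D"
proof (rule Delta.base)
  show "kset 2 l D {x, y}"
    using assms(1-3) by (auto simp: kset_def consistent_def card_insert_if)
  show "qsol A B {x, y} \<noteq> {}"
    using assms(4) qsol_iff[of x y A B "{x,y}"] by auto
qed

lemma repair_cover:
  assumes "repair l D r" "d \<in> D"
  shows "\<exists>x\<in>r. key l x = key l d"
proof (rule ccontr)
  assume ny: "\<not> (\<exists>x\<in>r. key l x = key l d)"
  have rD: "r \<subseteq> D" and rc: "consistent l r"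
    and rmax: "\<forall>r'. r \<subseteq> r' \<longrightarrow> r' \<subseteq> D \<longrightarrow> consistent l r' \<longrightarrow> r' = r"
    using assms(1) unfolding repair_def by blast+
  have c2: "consistent l (insert d r)"
    unfolding consistent_def
  proof (intro ballI impI)
    fix x y assume x: "x \<in> insert d r" and y: "y \<in> insert d r" and k: "key l x = key l y"
    show "x = y"
    proof (cases "x = d")
      case True
      then show ?thesis using y k ny by auto
    next
      case False
      then have xr: "x \<in> r" using x by simp
      show ?thesis
      proof (cases "y = d")
        case True
        then show ?thesis using xr k ny by auto
      next
        case False
        then have "y \<in> r" using y by simp
        then show ?thesis using rc xr k unfolding consistent_def by blast
      qed
    qed
  qed
  have s1: "r \<subseteq> insert d r" by (rule subset_insertI)
  have s2: "insert d r \<subseteq> D" using rD assms(2) by simp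
  have "insert d r = r"
    by (rule rmax[rule_format, OF s1 s2 c2])
  then show False using ny by blast
qed

lemma repair_intro:
  assumes sD: "s \<subseteq> D" and cs: "consistent l s" and cov: "\<forall>d\<in>D. \<exists>x\<in>s. key l x = key l d"
  shows "repair l D s"
  unfolding repair_def
proof (intro conjI allI impI)
  show "s \<subseteq> D" by (rule sD)
  show "consistent l s" by (rule cs)
next
  fix r' assume sr': "s \<subseteq> r'" and r'D: "r' \<subseteq> D" and cr': "consistent l r'"
  have "r' \<subseteq> s"
  proof
    fix d assume dr': "d \<in> r'"
    then have "d \<in> D" using r'D by blast
    then obtain x where xs: "x \<in> s" and kx: "key l x = key l d" using cov by blast
    have "x \<in> r'" using xs sr' by blast
    then have "x = d" using cr' dr' kx unfolding consistent_def by blast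
    then show "d \<in> s" using xs by simp
  qed
  then show "r' = s" using sr' by (rule equalityI)
qed

theorem lemma6p3:
  fixes k l :: nat and A B :: "'v list" and D r :: "'e list set" and a b :: "'e list"
  assumes "k \<ge> 1" and "l \<le> k"
    and "length A = k" and "length B = k"
    and "key l A \<noteq> key l B"
    and "\<not> equiv_single_atom k l A B TYPE('e)"
    and "zigzag k l A B TYPE('e)"
    and "infinite (UNIV :: 'e set)"
    and "database k D"
    and "repair l D r"
    and "(a, b) \<in> qsol A B r"
  shows "{a} \<in> Delta 2 l A B D \<or> (\<exists>s. repair l D s \<and> qsol A B s \<subset> qsol A B r)"
proof (cases "{a} \<in> Delta 2 l A B D")
  case True
  then show ?thesis by blast
next
  case False
  note aN = False
  have rD: "r \<subseteq> D" and rc: "consistent l r"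
    and rmax: "\<And>r'. r \<subseteq> r' \<Longrightarrow> r' \<subseteq> D \<Longrightarrow> consistent l r' \<Longrightarrow> r' = r"
    using assms(10) unfolding repair_def by blast+
  have ar: "a \<in> r" and br: "b \<in> r" and Qab: "Qr A B a b"
    using assms(11) qsol_iff by blast+
  have finD: "finite D" using assms(9) by (simp add: database_def)
  have aD: "a \<in> D" and bD: "b \<in> D" using ar br rD by auto
  have zz: "\<And>t y0 y x. t \<in> D \<Longrightarrow> y0 \<in> D \<Longrightarrow> y \<in> D \<Longrightarrow> x \<in> D \<Longrightarrow> key l t \<noteq> key l x
      \<Longrightarrow> t \<noteq> y0 \<Longrightarrow> key l y0 = key l y \<Longrightarrow> Qr A B t y0 \<Longrightarrow> Qr A B x y \<Longrightarrow> Qr A B t y"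
  proof -
    fix t y0 y x
    assume h: "t \<in> D" "y0 \<in> D" "y \<in> D" "x \<in> D" "key l t \<noteq> key l x"
      "t \<noteq> y0" "key l y0 = key l y" "Qr A B t y0" "Qr A B x y"
    have "(t, y) \<in> qsol A B D"
      using assms(7)[unfolded zigzag_def, rule_format, of D t y0 y x] assms(9) h qsol_iff by blast
    then show "Qr A B t y" using qsol_iff by blast
  qed
  have kab: "key l b \<noteq> key l a"
  proof
    assume "key l b = key l a"
    then have "a = b" using rc ar br unfolding consistent_def by blast
    then have "{a, a} \<in> Delta 2 l A B D" using pair_in_Delta[of a D a l A B] aD Qab by blast
    then show False using aN by simp
  qed
  have ksa: "kset 2 l D {a}" using aD by (simp add: kset_def consistent_def)
  have Kb: "{w\<in>D. key l w = key l b} \<in> blocks l D"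
    unfolding blocks_def using bD by blast
  obtain b' where b'K: "b' \<in> {w\<in>D. key l w = key l b}"
    and b'nd: "\<forall>S'. S' \<subseteq> {a} \<union> {b'} \<longrightarrow> S' \<notin> Delta 2 l A B D"
    using not_Delta_step[OF ksa aN Kb] by blast
  have b'D: "b' \<in> D" and kb': "key l b' = key l b" using b'K by auto
  have ab'N: "{a, b'} \<notin> Delta 2 l A B D" using b'nd by auto
  have nQab': "\<not> Qr A B a b'"
    using pair_in_Delta[of a D b' l A B] aD b'D kb' kab ab'N by auto
  define good where "good N \<longleftrightarrow> N \<subseteq> D \<and> consistent l N \<and> (\<exists>n\<in>N. key l n = key l b) \<and>
     (\<forall>n\<in>N. n \<notin> r \<and> key l n \<noteq> key l a \<and> {a, n} \<notin> Delta 2 l A B D \<and>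
        (\<exists>t y0. (t = a \<or> t \<in> N) \<and> y0 \<in> r \<and> key l y0 = key l n \<and> Qr A B t y0 \<and>
            \<not> Qr A B t n \<and> t \<noteq> y0))" for N
  have b'r: "b' \<notin> r"
  proof
    assume "b' \<in> r"
    then have "b' = b" using rc br kb' unfolding consistent_def by blast
    then show False using Qab nQab' by simp
  qed
  have ab: "a \<noteq> b" using kab by auto
  have g0: "good {b'}"
    unfolding good_def using b'D b'r kb' kab ab'N Qab nQab' ar br ab
    by (auto simp: consistent_def)
  have bnd: "\<forall>N. good N \<longrightarrow> card N < Suc (card D)"
  proof (intro allI impI)
    fix N assume "good N"
    then have "N \<subseteq> D" unfolding good_def by (elim conjE)
    then have "card N \<le> card D" by (rule card_mono[OF finD])
    then show "card N < Suc (card D)" by simp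
  qed
  obtain N where gN: "good N" and maxN0: "\<forall>N'. good N' \<longrightarrow> card N' \<le> card N"
    using Lattices_Big.ex_has_greatest_nat[of good "{b'}" card "Suc (card D)", OF g0 bnd] by (elim exE conjE)
  have maxN: "\<And>N'. good N' \<Longrightarrow> card N' \<le> card N" using maxN0 by (elim allE impE)
  note gN' = gN[unfolded good_def]
  have ND: "N \<subseteq> D" using gN' by (elim conjE)
  have Nc: "consistent l N" using gN' by (elim conjE)
  have Nb: "\<exists>n\<in>N. key l n = key l b" using gN' by (elim conjE)
  have Nall: "\<forall>n\<in>N. n \<notin> r \<and> key l n \<noteq> key l a \<and> {a, n} \<notin> Delta 2 l A B D \<and>
        (\<exists>t y0. (t = a \<or> t \<in> N) \<and> y0 \<in> r \<and> key l y0 = key l n \<and> Qr A B t y0 \<and>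
            \<not> Qr A B t n \<and> t \<noteq> y0)" using gN' by (elim conjE)
  have Nprop: "\<And>n. n \<in> N \<Longrightarrow> n \<notin> r \<and> key l n \<noteq> key l a \<and> {a, n} \<notin> Delta 2 l A B D \<and>
        (\<exists>t y0. (t = a \<or> t \<in> N) \<and> y0 \<in> r \<and> key l y0 = key l n \<and> Qr A B t y0 \<and>
            \<not> Qr A B t n \<and> t \<noteq> y0)"
    using Nall by (rule bspec)
  have finN: "finite N" using ND finD finite_subset by blast
  define s where "s = {x\<in>r. \<forall>n\<in>N. key l x \<noteq> key l n} \<union> N"
  have sD: "s \<subseteq> D" using rD ND by (auto simp: s_def)
  have cs: "consistent l s"
    unfolding consistent_def
  proof (intro ballI impI)
    fix x y assume xs: "x \<in> s" and ys: "y \<in> s" and kxy: "key l x = key l y"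
    show "x = y"
    proof (cases "x \<in> N")
      case True
      show ?thesis
      proof (cases "y \<in> N")
        case True
        then show ?thesis using Nc \<open>x \<in> N\<close> kxy unfolding consistent_def by blast
      next
        case False
        then show ?thesis using ys \<open>x \<in> N\<close> kxy unfolding s_def by auto
      qed
    next
      case False
      then have xr: "x \<in> r" and xk: "\<forall>n\<in>N. key l x \<noteq> key l n" using xs unfolding s_def by auto
      show ?thesis
      proof (cases "y \<in> N")
        case True
        then show ?thesis using xk kxy by auto
      next
        case False
        then have "y \<in> r" using ys unfolding s_def by auto
        then show ?thesis using rc xr kxy unfolding consistent_def by blast
      qed
    qed
  qed
  have aNk: "\<forall>n\<in>N. key l a \<noteq> key l n"
  proof
    fix n assume "n \<in> N"
    then have "key l n \<noteq> key l a" using Nprop by blast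
    then show "key l a \<noteq> key l n" by simp
  qed
  have as: "a \<in> s" unfolding s_def using ar aNk by blast
  have C1: "\<And>y x. y \<in> N \<Longrightarrow> x \<in> s \<Longrightarrow> \<not> Qr A B x y"
  proof
    fix y x assume yN: "y \<in> N" and xs: "x \<in> s" and Qxy: "Qr A B x y"
    obtain t y0 where t: "t = a \<or> t \<in> N" and y0r: "y0 \<in> r" and ky: "key l y0 = key l y"
      and Qt: "Qr A B t y0" and nQt: "\<not> Qr A B t y" and ty: "t \<noteq> y0"
      using Nprop[OF yN] by blast
    have ts: "t \<in> s" using t as unfolding s_def by blast
    show False
    proof (cases "key l t = key l x")
      case True
      then have "t = x" using cs ts xs unfolding consistent_def by blast
      then show False using Qxy nQt by simp
    next
      case False
      have "t \<in> D" using ts sD by blast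
      moreover have "x \<in> D" using xs sD by blast
      ultimately have "Qr A B t y" using zz[of t y0 y x] False ty ky Qt Qxy y0r rD yN ND by blast
      then show False using nQt by simp
    qed
  qed
  have C2: "\<And>n z. n \<in> N \<Longrightarrow> z \<in> s \<Longrightarrow> \<not> Qr A B n z"
  proof
    fix n z assume nN: "n \<in> N" and zs: "z \<in> s" and Qnz: "Qr A B n z"
    have nr: "n \<notin> r" and kna: "key l n \<noteq> key l a" and anN: "{a, n} \<notin> Delta 2 l A B D"
      using Nprop[OF nN] by blast+
    have nD: "n \<in> D" using nN ND by blast
    show False
    proof (cases "z \<in> N")
      case True
      then show False using C1[OF True] nN Qnz unfolding s_def by blast
    next
      case zNN: False
      then have zr: "z \<in> r" and zk: "\<forall>n\<in>N. key l z \<noteq> key l n" using zs unfolding s_def by auto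
      show False
      proof (cases "z = a")
        case True
        have "{n, a} \<in> Delta 2 l A B D" using pair_in_Delta[of n D a l A B] nD aD kna Qnz True by blast
        then show False using anN by (simp add: insert_commute)
      next
        case za: False
        have zD: "z \<in> D" using zr rD by blast
        have kza: "key l z \<noteq> key l a" using za rc zr ar unfolding consistent_def by blast
        have kzn: "key l z \<noteq> key l n" using zk nN by blast
        have ksan: "kset 2 l D {a, n}"
          using aD nD kna by (auto simp: kset_def consistent_def card_insert_if)
        have Kz: "{w\<in>D. key l w = key l z} \<in> blocks l D"
          unfolding blocks_def using zD by blast
        obtain y' where y'K: "y' \<in> {w\<in>D. key l w = key l z}"
          and y'nd: "\<forall>S'. S' \<subseteq> {a, n} \<union> {y'} \<longrightarrow> S' \<notin> Delta 2 l A B D"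
          using not_Delta_step[OF ksan anN Kz] by blast
        have y'D: "y' \<in> D" and ky': "key l y' = key l z" using y'K by auto
        have ay'N: "{a, y'} \<notin> Delta 2 l A B D" using y'nd by auto
        have ny'N: "{n, y'} \<notin> Delta 2 l A B D" using y'nd by auto
        have nQny': "\<not> Qr A B n y'"
          using pair_in_Delta[of n D y' l A B] nD y'D ky' kzn ny'N by auto
        have y'r: "y' \<notin> r"
        proof
          assume "y' \<in> r"
          then have "y' = z" using rc zr ky' unfolding consistent_def by blast
          then show False using Qnz nQny' by simp
        qed
        have y'N: "y' \<notin> N" using zk ky' by auto
        have nz: "n \<noteq> z" using nr zr by blast
        have "good (insert y' N)"
          unfolding good_def
        proof (intro conjI)
          show "insert y' N \<subseteq> D" using y'D ND by blast
          show "consistent l (insert y' N)"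
            using Nc zk ky' unfolding consistent_def by auto
          show "\<exists>n\<in>insert y' N. key l n = key l b" using Nb by blast
          show "\<forall>m\<in>insert y' N. m \<notin> r \<and> key l m \<noteq> key l a \<and> {a, m} \<notin> Delta 2 l A B D \<and>
            (\<exists>t y0. (t = a \<or> t \<in> insert y' N) \<and> y0 \<in> r \<and> key l y0 = key l m \<and> Qr A B t y0 \<and>
            \<not> Qr A B t m \<and> t \<noteq> y0)"
          proof
            fix m assume "m \<in> insert y' N"
            then show "m \<notin> r \<and> key l m \<noteq> key l a \<and> {a, m} \<notin> Delta 2 l A B D \<and>
            (\<exists>t y0. (t = a \<or> t \<in> insert y' N) \<and> y0 \<in> r \<and> key l y0 = key l m \<and> Qr A B t y0 \<and>
            \<not> Qr A B t m \<and> t \<noteq> y0)"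
            proof
              assume m: "m = y'"
              have e: "\<exists>t y0. (t = a \<or> t \<in> insert y' N) \<and> y0 \<in> r \<and> key l y0 = key l y' \<and> Qr A B t y0 \<and>
                  \<not> Qr A B t y' \<and> t \<noteq> y0"
                by (rule exI[of _ n], rule exI[of _ z]) (use nN zr ky' Qnz nQny' nz in simp)
              have kk: "key l y' \<noteq> key l a" using ky' kza by simp
              show ?thesis unfolding m using y'r kk ay'N e by (intro conjI)
            next
              assume "m \<in> N"
              then show ?thesis using Nprop[of m] by blast
            qed
          qed
        qed
        then have "card (insert y' N) \<le> card N" by (rule maxN)
        then show False using finN y'N by simp
      qed
    qed
  qed
  have cover: "\<forall>d\<in>D. \<exists>x\<in>s. key l x = key l d"
  proof
    fix d assume dD: "d \<in> D"
    obtain x where xr: "x \<in> r" and kx: "key l x = key l d"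
      using repair_cover[OF assms(10) dD] by blast
    show "\<exists>x\<in>s. key l x = key l d"
    proof (cases "\<forall>n\<in>N. key l x \<noteq> key l n")
      case True
      then have "x \<in> s" using xr unfolding s_def by blast
      then show ?thesis using kx by blast
    next
      case False
      then obtain n where nN: "n \<in> N" and kn: "key l x = key l n" by blast
      have "n \<in> s" using nN unfolding s_def by blast
      then show ?thesis using kx kn by metis
    qed
  qed
  have rep_s: "repair l D s" by (rule repair_intro[OF sD cs cover])
  have sub: "qsol A B s \<subseteq> qsol A B r"
  proof
    fix p assume ps: "p \<in> qsol A B s"
    obtain x y where p: "p = (x, y)" by (cases p)
    have xs: "x \<in> s" and ys: "y \<in> s" and Qxy: "Qr A B x y" using ps p qsol_iff by blast+
    have "x \<notin> N" using C2 xs ys Qxy by blast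
    moreover have "y \<notin> N" using C1 xs ys Qxy by blast
    ultimately have "x \<in> r" "y \<in> r" using xs ys unfolding s_def by auto
    then show "p \<in> qsol A B r" using p Qxy qsol_iff by blast
  qed
  have bs: "b \<notin> s"
  proof
    assume "b \<in> s"
    obtain n where nN: "n \<in> N" and kn: "key l n = key l b" using Nb by blast
    have "b \<notin> N" using Nprop br by blast
    then have "\<forall>n\<in>N. key l b \<noteq> key l n" using \<open>b \<in> s\<close> unfolding s_def by blast
    then show False using nN kn by metis
  qed
  have "(a, b) \<notin> qsol A B s" using bs qsol_iff by blast
  then have "qsol A B s \<subset> qsol A B r" using sub assms(11) by blast
  then show ?thesis using rep_s by blast
qed

end
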